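(* Let $X$ and $Y$ be complex Banach spaces with $Y$ continuously embedded in $X$, let $C\in L(X)$, let $B$ be a closed linear operator on $X$, let $A:\mathbb N_0\to L(Y,X)$, and let $k:\mathbb N_0\to\mathbb C$ with $k\neq0$. Let $(S(v))_{v\in\mathbb N_0}\subseteq L(X)$ be such that $S(v)Y\subseteq Y$ and $S(v)_{|Y}\in L(Y)$ for all $v\in\mathbb N_0$, and for all $v\in\mathbb N_0$ and $y\in Y$ one has $S(v)y\in D(B)$ and $$BS(v)y=k(v)Cy+\sum_{j=0}^{v}A(v-j)S(j)y .$$ Assume $\sum_{v=0}^{\infty}\|S(v)_{|Y}\|_{L(Y)}<\infty$ and $\sum_{v=0}^{\infty}\|(A\ast_0S)(v)\|_{L(Y,X)}<\infty$, where $(A\ast_0 S)(v)y:=\sum_{j=0}^{v}A(v-j)S(j)y$ for $y\in Y$. Suppose further that either (i) $f:\mathbb Z\to Y$ is bounded (in $Y$), $\sum_{v=0}^{\infty}|k(v)|<\infty$ and $\sum_{v=0}^{\infty}\|A(v)\|_{L(Y,X)}<\infty$; or (ii) $f\in l^1(\mathbb Z:Y)$, $k$ is bounded and $\sup_{v\ge0}\|A(v)\|_{L(Y,X)}<\infty$. Define $u(v):=\sum_{l=-\infty}^{v}S(v-l)f(l)$ for $v\in\mathbb Z$. Then $u$ is bounded, $u\in l^1(\mathbb Z:Y)$ provided that (ii) holds, $u(v)\in D(B)$ for all $v\in\mathbb Z$, and $$Bu(v)=\sum_{l=-\infty}^{v}k(v-l)Cf(l)+\sum_{l=-\infty}^{v}A(v-l)u(l),\quad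 v\in\mathbb Z .$$
   Context: $L(X)$, $L(Y)$, $L(Y,X)$ denote spaces of bounded linear operators with operator norms; $l^1(\mathbb Z:Y)$ is the space of summable $Y$-valued sequences on $\mathbb Z$. *)

theory Defs
  imports "HOL-Analysis.Analysis"
begin

text \<open>Complex Banach spaces: the library only has real normed spaces, so we add a
  complex scalar multiplication compatible with the real one and with the norm.\<close>

class cbanach = banach +
  fixes scaleC :: "complex \<Rightarrow> 'a \<Rightarrow> 'a"  (infixr \<open>*\<^sub>C\<close> 75)
  assumes scaleC_add_right: "a *\<^sub>C (x + y) = a *\<^sub>C x + a *\<^sub>C y"
    and scaleC_add_left: "(a + b) *\<^sub>C x = a *\<^sub>C x + b *\<^sub>C x"
    and scaleC_scaleC: "a *\<^sub>C (b *\<^sub>C x) = (a * b) *\<^sub>C x"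
    and scaleC_one: "1 *\<^sub>C x = x"
    and scaleR_scaleC: "r *\<^sub>R x = complex_of_real r *\<^sub>C x"
    and norm_scaleC: "norm (a *\<^sub>C x) = cmod a * norm x"

definition bounded_clinear :: "('a::cbanach \<Rightarrow> 'b::cbanach) \<Rightarrow> bool" where
  "bounded_clinear T \<longleftrightarrow> bounded_linear T \<and> (\<forall>c x. T (c *\<^sub>C x) = c *\<^sub>C T x)"

definition closed_operator :: "'a::cbanach set \<Rightarrow> ('a \<Rightarrow> 'a) \<Rightarrow> bool" where
  "closed_operator D B \<longleftrightarrow>
     0 \<in> D \<and> (\<forall>x\<in>D. \<forall>y\<in>D. x + y \<in> D \<and> B (x + y) = B x + B y)
     \<and> (\<forall>c. \<forall>x\<in>D. c *\<^sub>C x \<in> D \<and> B (c *\<^sub>C x) = c *\<^sub>C B x)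
     \<and> closed ((\<lambda>x. (x, B x)) ` D)"

end

theory Submission imports Defs begin
lemma closed_op_sums:
  fixes B :: "'x::cbanach \<Rightarrow> 'x"
  assumes B: "closed_operator D B" and xD: "\<And>n. x n \<in> D"
    and xs: "x sums a" and bs: "(\<lambda>n. B (x n)) sums b"
  shows "a \<in> D \<and> B a = b"
proof -
  have D0: "0 \<in> D" and Dadd: "\<And>p q. p \<in> D \<Longrightarrow> q \<in> D \<Longrightarrow> p + q \<in> D \<and> B (p + q) = B p + B q"
    and cl: "closed ((\<lambda>x. (x, B x)) ` D)"
    using B unfolding closed_operator_def by auto
  have B0: "B 0 = 0"
  proof -
    have "B (0 + 0) = B 0 + B 0" using Dadd[OF D0 D0] by blast
    then show ?thesis by simp
  qed
  have P: "sum x {..<n} \<in> D \<and> B (sum x {..<n}) = (\<Sum>j<n. B (x j))" for n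
  proof (induction n)
    case 0 then show ?case using D0 B0 by simp
  next
    case (Suc n)
    then show ?case using Dadd[of "sum x {..<n}" "x n"] xD by simp
  qed
  have lim: "(\<lambda>n. (sum x {..<n}, B (sum x {..<n}))) \<longlonglongrightarrow> (a, b)"
    using xs bs P unfolding sums_def by (simp add: tendsto_Pair)
  have mem: "(sum x {..<n}, B (sum x {..<n})) \<in> (\<lambda>x. (x, B x)) ` D" for n
    by (rule image_eqI[where x="sum x {..<n}"]) (use P in auto)
  have "(a, b) \<in> (\<lambda>x. (x, B x)) ` D"
    by (rule closed_sequentially[OF cl _ lim]) (use mem in blast)
  then show ?thesis by auto
qed
lemma rearr:
  fixes A :: "nat \<Rightarrow> 'y::banach \<Rightarrow> 'x::banach" and SY :: "nat \<Rightarrow> 'y \<Rightarrow> 'y" and h :: "nat \<Rightarrow> 'y"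
  assumes A: "\<And>j. bounded_linear (A j)"
    and abs: "(\<lambda>p. norm (A (fst p) (SY (snd p) (h (fst p + snd p))))) summable_on UNIV"
    and inner: "\<And>j. summable (\<lambda>i. norm (SY i (h (j+i))))"
  shows "\<exists>T. (\<lambda>j. A j (\<Sum>i. SY i (h (j+i)))) sums T \<and> (\<lambda>n. \<Sum>i\<le>n. A (n-i) (SY i (h n))) sums T"
proof -
  define g where "g = (\<lambda>p. A (fst p) (SY (snd p) (h (fst p + snd p))))"
  have gs: "g summable_on UNIV"
    using abs_summable_summable[of g UNIV] abs unfolding g_def by simp
  define T where "T = infsum g UNIV"
  have gS: "g summable_on Sigma UNIV (\<lambda>_. UNIV)" using gs by simp
  have s1: "(\<lambda>j. infsum (\<lambda>i. g (j,i)) UNIV) summable_on UNIV"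
    and e1: "infsum (\<lambda>j. infsum (\<lambda>i. g (j,i)) UNIV) UNIV = infsum (\<lambda>(j,i). g (j,i)) (Sigma UNIV (\<lambda>_. UNIV))"
    using summable_on_Sigma_banach[of "\<lambda>j i. g (j,i)" UNIV "\<lambda>_. UNIV"]
      infsum_Sigma'_banach[of "\<lambda>j i. g (j,i)" UNIV "\<lambda>_. UNIV"] gS by auto
  have inn: "infsum (\<lambda>i. g (j,i)) UNIV = A j (\<Sum>i. SY i (h (j+i)))" for j
  proof -
    have "((\<lambda>i. SY i (h (j+i))) has_sum (\<Sum>i. SY i (h (j+i)))) UNIV"
      using norm_summable_imp_has_sum[OF inner[of j]] summable_norm_cancel[OF inner[of j]]
      by (simp add: summable_sums)
    from has_sum_bounded_linear[OF A this] show ?thesis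
      unfolding g_def by (simp add: infsumI)
  qed
  have P1: "(\<lambda>j. A j (\<Sum>i. SY i (h (j+i)))) sums T"
  proof -
    have eqa: "(\<lambda>(j,i). g (j,i)) = g" by auto
    have "infsum (\<lambda>j. infsum (\<lambda>i. g (j,i)) UNIV) UNIV = T"
      using e1 eqa unfolding T_def by simp
    then have "((\<lambda>j. infsum (\<lambda>i. g (j,i)) UNIV) has_sum T) UNIV"
      using has_sum_infsum[OF s1] by simp
    then show ?thesis using inn by (simp add: has_sum_imp_sums)
  qed
  define \<phi> where "\<phi> = (\<lambda>(n::nat,i::nat). (n-i, i))"
  have bij: "bij_betw \<phi> (Sigma UNIV (\<lambda>n. {..n})) UNIV"
    by (rule bij_betwI[where g="\<lambda>(j,i). (j+i,i)"]) (auto simp: \<phi>_def)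
  have hs: "((\<lambda>x. g (\<phi> x)) has_sum T) (Sigma UNIV (\<lambda>n. {..n}))"
    using has_sum_reindex_bij_betw[OF bij, of g T] gs unfolding T_def by simp
  then have gS2: "(\<lambda>x. g (\<phi> x)) summable_on (Sigma UNIV (\<lambda>n. {..n}))"
    using summable_on_def by blast
  have eqc: "(\<lambda>(n,i). g (\<phi> (n,i))) = (\<lambda>x. g (\<phi> x))" by auto
  have gS2': "(\<lambda>(n,i). g (\<phi> (n,i))) summable_on (Sigma UNIV (\<lambda>n. {..n}))"
    using gS2 eqc by simp
  have s2: "(\<lambda>n. infsum (\<lambda>i. g (\<phi> (n,i))) {..n}) summable_on UNIV"
    and e2: "infsum (\<lambda>n. infsum (\<lambda>i. g (\<phi> (n,i))) {..n}) UNIV = infsum (\<lambda>(n,i). g (\<phi> (n,i))) (Sigma UNIV (\<lambda>n. {..n}))"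
    using summable_on_Sigma_banach[of "\<lambda>n i. g (\<phi> (n,i))" UNIV "\<lambda>n. {..n}"]
      infsum_Sigma'_banach[of "\<lambda>n i. g (\<phi> (n,i))" UNIV "\<lambda>n. {..n}"] gS2'
    by (auto simp del: infsum_finite)
  have inn2: "infsum (\<lambda>i. g (\<phi> (n,i))) {..n} = (\<Sum>i\<le>n. A (n-i) (SY i (h n)))" for n
    by (simp add: g_def \<phi>_def)
  have P2: "(\<lambda>n. \<Sum>i\<le>n. A (n-i) (SY i (h n))) sums T"
  proof -
    have "((\<lambda>n. infsum (\<lambda>i. g (\<phi> (n,i))) {..n}) has_sum T) UNIV"
    proof -
      have "infsum (\<lambda>(n,i). g (\<phi> (n,i))) (Sigma UNIV (\<lambda>n. {..n})) = T"
        using infsumI[OF hs] eqc by simp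
      then show ?thesis using has_sum_infsum[OF s2] e2 by simp
    qed
    then show ?thesis using inn2 by (simp add: has_sum_imp_sums)
  qed
  show ?thesis using P1 P2 by blast
qed
lemma fin_le_infsum:
  fixes f :: "int \<Rightarrow> 'y::real_normed_vector"
  assumes "(\<lambda>l. norm (f l)) summable_on UNIV" "finite V" "inj_on \<phi> V"
  shows "(\<Sum>x\<in>V. norm (f (\<phi> x))) \<le> infsum (\<lambda>l. norm (f l)) UNIV"
proof -
  have "(\<Sum>x\<in>V. norm (f (\<phi> x))) = (\<Sum>l\<in>\<phi>`V. norm (f l))"
    by (simp add: sum.reindex assms(3))
  also have "\<dots> \<le> infsum (\<lambda>l. norm (f l)) UNIV"
    by (rule finite_sum_le_infsum) (use assms in auto)
  finally show ?thesis .
qed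

lemma summable_shift_norm:
  fixes f :: "int \<Rightarrow> 'y::real_normed_vector"
  assumes "(\<lambda>l. norm (f l)) summable_on UNIV"
  shows "summable (\<lambda>j. norm (f (w - int j)))"
proof -
  have "(\<lambda>j. norm (f (w - int j))) summable_on UNIV"
  proof (rule nonneg_bdd_above_summable_on)
    show "bdd_above (sum (\<lambda>j. norm (f (w - int j))) ` {F. F \<subseteq> UNIV \<and> finite F})"
    proof (rule bdd_aboveI2)
      fix F :: "nat set" assume "F \<in> {F. F \<subseteq> UNIV \<and> finite F}"
      then show "(\<Sum>j\<in>F. norm (f (w - int j))) \<le> infsum (\<lambda>l. norm (f l)) UNIV"
        using fin_le_infsum[OF assms, of F "\<lambda>j. w - int j"] by (auto simp: inj_on_def)
    qed
  qed auto
  then show ?thesis by (simp add: summable_on_UNIV_nonneg_real_iff)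
qed

lemma pair_summable:
  fixes b :: "nat \<times> nat \<Rightarrow> real"
  assumes nn: "\<And>p. b p \<ge> 0" and K: "\<And>N. (\<Sum>j\<le>N. \<Sum>i\<le>N. b (j,i)) \<le> K"
  shows "b summable_on UNIV"
proof (rule nonneg_bdd_above_summable_on)
  show "bdd_above (sum b ` {F. F \<subseteq> UNIV \<and> finite F})"
  proof (rule bdd_aboveI2)
    fix P :: "(nat \<times> nat) set" assume "P \<in> {F. F \<subseteq> UNIV \<and> finite F}"
    then have fin: "finite P" by auto
    define N where "N = Max (fst ` P \<union> snd ` P)"
    have sub: "P \<subseteq> {..N} \<times> {..N}"
    proof
      fix p assume "p \<in> P"
      then have "fst p \<le> N" "snd p \<le> N" unfolding N_def using fin
        by (auto intro!: Max_ge)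
      then show "p \<in> {..N} \<times> {..N}" by (cases p) auto
    qed
    have "sum b P \<le> sum b ({..N} \<times> {..N})"
      by (rule sum_mono2) (use sub nn in auto)
    also have "\<dots> = (\<Sum>j\<le>N. \<Sum>i\<le>N. b (j,i))"
      by (simp add: sum.cartesian_product)
    also have "\<dots> \<le> K" by (rule K)
    finally show "sum b P \<le> K" .
  qed
qed (use nn in auto)
theorem theorem2p4:
  fixes J :: "'y::cbanach \<Rightarrow> 'x::cbanach"
    and C :: "'x \<Rightarrow> 'x" and B :: "'x \<Rightarrow> 'x" and D :: "'x set"
    and A :: "nat \<Rightarrow> 'y \<Rightarrow> 'x" and k :: "nat \<Rightarrow> complex"
    and S :: "nat \<Rightarrow> 'x \<Rightarrow> 'x" and SY :: "nat \<Rightarrow> 'y \<Rightarrow> 'y"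
    and f :: "int \<Rightarrow> 'y" and u :: "int \<Rightarrow> 'y"
  assumes emb: "bounded_clinear J" "inj J"
    and C: "bounded_clinear C"
    and B: "closed_operator D B"
    and A: "\<forall>v. bounded_clinear (A v)"
    and k: "k \<noteq> (\<lambda>_. 0)"
    and S: "\<forall>v. bounded_clinear (S v)"
    and SY: "\<forall>v. bounded_clinear (SY v)" "\<forall>v y. S v (J y) = J (SY v y)"
    and SD: "\<forall>v y. S v (J y) \<in> D"
    and eq: "\<forall>v y. B (S v (J y)) = k v *\<^sub>C C (J y) + (\<Sum>j\<le>v. A (v - j) (SY j y))"
    and sumS: "summable (\<lambda>v. onorm (SY v))"
    and sumAS: "summable (\<lambda>v. onorm (\<lambda>y. \<Sum>j\<le>v. A (v - j) (SY j y)))"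
    and cases: "(bounded (range f) \<and> summable (\<lambda>v. norm (k v)) \<and> summable (\<lambda>v. onorm (A v)))
              \<or> ((\<lambda>l. norm (f l)) summable_on UNIV \<and> bounded (range k)
                 \<and> bdd_above (range (\<lambda>v. onorm (A v))))"
    and u_def: "u = (\<lambda>v. \<Sum>j. SY j (f (v - int j)))"
  shows "(\<forall>v. summable (\<lambda>j. SY j (f (v - int j))))
         \<and> bounded (range u)
         \<and> (((\<lambda>l. norm (f l)) summable_on UNIV \<and> bounded (range k)
               \<and> bdd_above (range (\<lambda>v. onorm (A v))))
             \<longrightarrow> (\<lambda>v. norm (u v)) summable_on UNIV)
         \<and> (\<forall>v. J (u v) \<in> D)
         \<and> (\<forall>v. summable (\<lambda>j. k j *\<^sub>C C (J (f (v - int j))))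
               \<and> summable (\<lambda>j. A j (u (v - int j)))
               \<and> B (J (u v)) = (\<Sum>j. k j *\<^sub>C C (J (f (v - int j)))) + (\<Sum>j. A j (u (v - int j))))"
proof -
  have blJ: "bounded_linear J" using emb(1) unfolding bounded_clinear_def by blast
  have blC: "bounded_linear C" using C unfolding bounded_clinear_def by blast
  have blA: "\<And>j. bounded_linear (A j)" using A unfolding bounded_clinear_def by blast
  have blSY: "\<And>j. bounded_linear (SY j)" using SY(1) unfolding bounded_clinear_def by blast
  define s where "s = (\<lambda>i. onorm (SY i))"
  have s0: "\<And>i. 0 \<le> s i" unfolding s_def using onorm_pos_le[OF blSY] by blast
  have sS: "summable s" using sumS s_def by simp
  have normSY: "\<And>i y. norm (SY i y) \<le> s i * norm y" unfolding s_def using onorm[OF blSY] by blast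
  define a where "a = (\<lambda>j. onorm (A j))"
  have a0: "\<And>j. 0 \<le> a j" unfolding a_def using onorm_pos_le[OF blA] by blast
  have normA: "\<And>j y. norm (A j y) \<le> a j * norm y" unfolding a_def using onorm[OF blA] by blast
  define cC where "cC = onorm C"
  define cJ where "cJ = onorm J"
  have cC0: "0 \<le> cC" and cJ0: "0 \<le> cJ" unfolding cC_def cJ_def
    using onorm_pos_le[OF blC] onorm_pos_le[OF blJ] by auto
  have normCJ: "\<And>y. norm (C (J y)) \<le> cC * (cJ * norm y)"
  proof -
    fix y
    have "norm (C (J y)) \<le> cC * norm (J y)" unfolding cC_def using onorm[OF blC] by blast
    also have "\<dots> \<le> cC * (cJ * norm y)"
      by (rule mult_left_mono) (use cC0 onorm[OF blJ] cJ_def in auto)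
    finally show "norm (C (J y)) \<le> cC * (cJ * norm y)" .
  qed
  obtain M where M: "\<And>l. norm (f l) \<le> M"
  proof -
    from cases show ?thesis
    proof
      assume "bounded (range f) \<and> summable (\<lambda>v. norm (k v)) \<and> summable (\<lambda>v. onorm (A v))"
      then obtain M where "\<forall>x\<in>range f. norm x \<le> M"
        unfolding Elementary_Metric_Spaces.bounded_iff by blast
      then show ?thesis using that by blast
    next
      assume h: "(\<lambda>l. norm (f l)) summable_on UNIV \<and> bounded (range k)
                 \<and> bdd_above (range (\<lambda>v. onorm (A v)))"
      have "norm (f l) \<le> infsum (\<lambda>l. norm (f l)) UNIV" for l
        using fin_le_infsum[of f "{l}" id] h by simp
      then show ?thesis using that by blast
    qed
  qed
  have M0: "0 \<le> M" using M[of 0] norm_ge_zero[of "f 0"] by linarith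
  have sM: "summable (\<lambda>j. s j * M)" using sS by (rule summable_mult2)
  have sumj2: "summable (\<lambda>j. s j * norm (f (w - int j)))" for w
  proof (rule summable_comparison_test'[OF sM, where N=0])
    fix n
    have "s n * norm (f (w - int n)) \<le> s n * M" by (rule mult_left_mono[OF M s0])
    then show "norm (s n * norm (f (w - int n))) \<le> s n * M" using s0[of n] by simp
  qed
  have sumj: "summable (\<lambda>j. norm (SY j (f (w - int j))))" for w
    by (rule summable_comparison_test'[OF sumj2[of w], where N=0]) (use normSY in auto)
  have ubound: "norm (u w) \<le> (\<Sum>j. s j * norm (f (w - int j)))" for w
  proof -
    have "norm (u w) \<le> (\<Sum>j. norm (SY j (f (w - int j))))"
      unfolding u_def by (simp add: summable_norm sumj)
    also have "\<dots> \<le> (\<Sum>j. s j * norm (f (w - int j)))"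
      by (rule suminf_le) (use normSY sumj sumj2 in auto)
    finally show ?thesis .
  qed
  have ubound2: "norm (u w) \<le> suminf s * M" for w
  proof -
    have "(\<Sum>j. s j * norm (f (w - int j))) \<le> (\<Sum>j. s j * M)"
      by (rule suminf_le[OF mult_left_mono[OF M s0] sumj2 sM])
    also have "\<dots> = suminf s * M" using suminf_mult2[OF sS] by simp
    finally show ?thesis using ubound[of w] by linarith
  qed
  have C1: "\<forall>v. summable (\<lambda>j. SY j (f (v - int j)))"
    using summable_norm_cancel[OF sumj] by blast
  have C2: "bounded (range u)"
    unfolding Elementary_Metric_Spaces.bounded_iff using ubound2 by blast
  have C3: "(\<lambda>v. norm (u v)) summable_on UNIV"
    if h: "(\<lambda>l. norm (f l)) summable_on UNIV" for dummy :: bool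
  proof (rule nonneg_bdd_above_summable_on)
    define F where "F = infsum (\<lambda>l. norm (f l)) UNIV"
    show "bdd_above (sum (\<lambda>v. norm (u v)) ` {F. F \<subseteq> UNIV \<and> finite F})"
    proof (rule bdd_aboveI2)
      fix V :: "int set" assume "V \<in> {F. F \<subseteq> UNIV \<and> finite F}"
      then have fin: "finite V" by auto
      have inner: "(\<Sum>v\<in>V. norm (f (v - int j))) \<le> F" for j
        unfolding F_def using fin_le_infsum[OF h fin, of "\<lambda>v. v - int j"] by (simp add: inj_on_def)
      have "(\<Sum>v\<in>V. norm (u v)) \<le> (\<Sum>v\<in>V. \<Sum>j. s j * norm (f (v - int j)))"
        by (rule sum_mono) (rule ubound)
      also have "\<dots> = (\<Sum>j. \<Sum>v\<in>V. s j * norm (f (v - int j)))"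
        by (rule suminf_sum[symmetric]) (rule sumj2)
      also have "\<dots> = (\<Sum>j. s j * (\<Sum>v\<in>V. norm (f (v - int j))))"
        by (simp add: sum_distrib_left)
      also have "\<dots> \<le> (\<Sum>j. s j * F)"
      proof (rule suminf_le)
        show "summable (\<lambda>j. s j * (\<Sum>v\<in>V. norm (f (v - int j))))"
          unfolding sum_distrib_left by (rule summable_sum) (rule sumj2)
        show "summable (\<lambda>j. s j * F)" using sS by (rule summable_mult2)
      qed (rule mult_left_mono[OF inner s0])
      also have "\<dots> = suminf s * F" using suminf_mult2[OF sS] by simp
      finally show "(\<Sum>v\<in>V. norm (u v)) \<le> suminf s * F" .
    qed
  qed auto
  have C45: "J (u v) \<in> D \<and> summable (\<lambda>j. k j *\<^sub>C C (J (f (v - int j))))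
               \<and> summable (\<lambda>j. A j (u (v - int j)))
               \<and> B (J (u v)) = (\<Sum>j. k j *\<^sub>C C (J (f (v - int j)))) + (\<Sum>j. A j (u (v - int j)))" for v
  proof -
    define h where "h = (\<lambda>n::nat. f (v - int n))"
    have hM: "norm (h n) \<le> M" for n unfolding h_def by (rule M)
    have hji: "h (j+i) = f ((v - int j) - int i)" for j i by (simp add: h_def algebra_simps)
    have ks: "summable (\<lambda>j. k j *\<^sub>C C (J (h j)))"
    proof -
      have nk: "norm (k j *\<^sub>C C (J (h j))) \<le> cmod (k j) * (cC * (cJ * norm (h j)))" for j
        unfolding norm_scaleC by (rule mult_left_mono[OF normCJ]) simp
      from cases show ?thesis
      proof
        assume "bounded (range f) \<and> summable (\<lambda>v. norm (k v)) \<and> summable (\<lambda>v. onorm (A v))"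
        then have "summable (\<lambda>j. cmod (k j) * (cC * (cJ * M)))"
          by (intro summable_mult2) simp
        then show ?thesis
        proof (rule summable_comparison_test'[where N=0])
          fix j :: nat
          have "cmod (k j) * (cC * (cJ * norm (h j))) \<le> cmod (k j) * (cC * (cJ * M))"
            by (intro mult_left_mono hM cC0 cJ0) auto
          then show "norm (k j *\<^sub>C C (J (h j))) \<le> cmod (k j) * (cC * (cJ * M))"
            using nk[of j] by linarith
        qed
      next
        assume h2: "(\<lambda>l. norm (f l)) summable_on UNIV \<and> bounded (range k)
                 \<and> bdd_above (range (\<lambda>v. onorm (A v)))"
        then obtain K where K: "\<And>j. norm (k j) \<le> K"
          unfolding Elementary_Metric_Spaces.bounded_iff by blast
        have "summable (\<lambda>j. K * (cC * (cJ * norm (h j))))"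
          unfolding h_def using summable_shift_norm[of f v] h2
          by (intro summable_mult) simp
        then show ?thesis
        proof (rule summable_comparison_test'[where N=0])
          fix j :: nat
          have "cmod (k j) * (cC * (cJ * norm (h j))) \<le> K * (cC * (cJ * norm (h j)))"
            by (rule mult_right_mono) (use K cC0 cJ0 in auto)
          then show "norm (k j *\<^sub>C C (J (h j))) \<le> K * (cC * (cJ * norm (h j)))"
            using nk[of j] by linarith
        qed
      qed
    qed
    define cv where "cv = (\<lambda>j y. \<Sum>i\<le>j. A (j-i) (SY i y))"
    have blcv: "bounded_linear (cv j)" for j
      unfolding cv_def by (intro bounded_linear_sum bounded_linear_compose[OF blA blSY])
    have cvs: "summable (\<lambda>j. cv j (h j))"
    proof -
      have "summable (\<lambda>j. onorm (cv j) * M)"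
        using sumAS unfolding cv_def by (rule summable_mult2)
      then show ?thesis
      proof (rule summable_comparison_test'[where N=0])
        fix j
        have "norm (cv j (h j)) \<le> onorm (cv j) * norm (h j)" by (rule onorm[OF blcv])
        also have "\<dots> \<le> onorm (cv j) * M" by (rule mult_left_mono[OF hM onorm_pos_le[OF blcv]])
        finally show "norm (cv j (h j)) \<le> onorm (cv j) * M" .
      qed
    qed
    define bnd where "bnd = (\<lambda>p. a (fst p) * (s (snd p) * norm (h (fst p + snd p))))"
    have bnd0: "\<And>p. 0 \<le> bnd p" unfolding bnd_def using a0 s0 by simp
    have bnds: "bnd summable_on UNIV"
    proof -
      from cases show ?thesis
      proof
        assume "bounded (range f) \<and> summable (\<lambda>v. norm (k v)) \<and> summable (\<lambda>v. onorm (A v))"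
        then have aS: "summable a" unfolding a_def by simp
        show ?thesis
        proof (rule pair_summable[OF bnd0])
          fix N
          have "(\<Sum>j\<le>N. \<Sum>i\<le>N. bnd (j,i)) \<le> (\<Sum>j\<le>N. \<Sum>i\<le>N. a j * (s i * M))"
            unfolding bnd_def
            by (intro sum_mono) (simp add: mult_left_mono[OF mult_left_mono[OF hM s0] a0])
          also have "\<dots> = (\<Sum>j\<le>N. a j) * ((\<Sum>i\<le>N. s i) * M)"
            unfolding sum_distrib_left sum_distrib_right by (rule sum.swap)
          also have "\<dots> \<le> suminf a * (suminf s * M)"
          proof (rule mult_mono)
            show "(\<Sum>j\<le>N. a j) \<le> suminf a" by (rule sum_le_suminf) (use aS a0 in auto)
            show "(\<Sum>i\<le>N. s i) * M \<le> suminf s * M"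
              by (rule mult_right_mono) (use sum_le_suminf[OF sS, of "{..N}"] s0 M0 in auto)
            show "0 \<le> suminf a" using suminf_nonneg[OF aS] a0 by auto
            show "0 \<le> (\<Sum>i\<le>N. s i) * M" using s0 M0 by (simp add: sum_nonneg)
          qed
          finally show "(\<Sum>j\<le>N. \<Sum>i\<le>N. bnd (j,i)) \<le> suminf a * (suminf s * M)" .
        qed
      next
        assume h2: "(\<lambda>l. norm (f l)) summable_on UNIV \<and> bounded (range k)
                 \<and> bdd_above (range (\<lambda>v. onorm (A v)))"
        then obtain Am where Am: "\<And>j. a j \<le> Am" unfolding a_def bdd_above_def by auto
        define F where "F = infsum (\<lambda>l. norm (f l)) UNIV"
        have inner: "(\<Sum>j\<le>N. norm (h (j+i))) \<le> F" for N i
          unfolding F_def h_def using fin_le_infsum[of f "{..N}" "\<lambda>j. v - int (j+i)"] h2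
          by (simp add: inj_on_def)
        show ?thesis
        proof (rule pair_summable[OF bnd0])
          fix N
          have "(\<Sum>j\<le>N. \<Sum>i\<le>N. bnd (j,i)) \<le> (\<Sum>j\<le>N. \<Sum>i\<le>N. Am * (s i * norm (h (j+i))))"
            unfolding bnd_def
            by (intro sum_mono) (simp add: mult_right_mono[OF Am mult_nonneg_nonneg[OF s0 norm_ge_zero]])
          also have "\<dots> = (\<Sum>i\<le>N. Am * s i * (\<Sum>j\<le>N. norm (h (j+i))))"
            by (subst sum.swap) (simp add: sum_distrib_left mult.assoc)
          also have "\<dots> \<le> (\<Sum>i\<le>N. Am * s i * F)"
            using s0 Am a0[of 0] by (intro sum_mono mult_left_mono[OF inner]) (use order_trans[OF a0[of 0] Am[of 0]] in auto)
          also have "\<dots> = Am * F * (\<Sum>i\<le>N. s i)"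
            by (simp add: sum_distrib_left mult_ac)
          also have "\<dots> \<le> Am * F * suminf s"
          proof (rule mult_left_mono)
            show "(\<Sum>i\<le>N. s i) \<le> suminf s" by (rule sum_le_suminf) (use sS s0 in auto)
            have "0 \<le> F" unfolding F_def by (rule infsum_nonneg) auto
            then show "0 \<le> Am * F" using Am[of 0] a0[of 0] by simp
          qed
          finally show "(\<Sum>j\<le>N. \<Sum>i\<le>N. bnd (j,i)) \<le> Am * F * suminf s" .
        qed
      qed
    qed
    have abs: "(\<lambda>p. norm (A (fst p) (SY (snd p) (h (fst p + snd p))))) summable_on UNIV"
    proof (rule Infinite_Sum.abs_summable_on_comparison_test'[OF bnds])
      fix p :: "nat \<times> nat"
      have "norm (A (fst p) (SY (snd p) (h (fst p + snd p)))) \<le> a (fst p) * norm (SY (snd p) (h (fst p + snd p)))"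
        by (rule normA)
      also have "\<dots> \<le> bnd p" unfolding bnd_def
        by (rule mult_left_mono[OF normSY a0])
      finally show "norm (A (fst p) (SY (snd p) (h (fst p + snd p)))) \<le> bnd p" .
    qed
    have inn: "summable (\<lambda>i. norm (SY i (h (j+i))))" for j
      unfolding hji by (rule sumj)
    obtain T where T1: "(\<lambda>j. A j (\<Sum>i. SY i (h (j+i)))) sums T"
      and T2: "(\<lambda>n. \<Sum>i\<le>n. A (n-i) (SY i (h n))) sums T"
      using rearr[OF blA abs inn] by blast
    have uj: "u (v - int j) = (\<Sum>i. SY i (h (j+i)))" for j
      unfolding u_def hji by simp
    have AT: "(\<lambda>j. A j (u (v - int j))) sums T" using T1 uj by simp
    have cvT: "(\<lambda>j. cv j (h j)) sums T" using T2 unfolding cv_def by simp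
    have xs: "(\<lambda>j. S j (J (h j))) sums J (u v)"
    proof -
      have "(\<lambda>j. SY j (h j)) sums u v"
        unfolding u_def h_def using C1 by (simp add: summable_sums)
      from bounded_linear.sums[OF blJ this] show ?thesis using SY(2) by simp
    qed
    have bs: "(\<lambda>j. B (S j (J (h j)))) sums ((\<Sum>j. k j *\<^sub>C C (J (h j))) + T)"
    proof -
      have "(\<lambda>j. k j *\<^sub>C C (J (h j)) + cv j (h j)) sums ((\<Sum>j. k j *\<^sub>C C (J (h j))) + T)"
        by (rule sums_add[OF summable_sums[OF ks] cvT])
      then show ?thesis using eq unfolding cv_def by simp
    qed
    have res: "J (u v) \<in> D \<and> B (J (u v)) = (\<Sum>j. k j *\<^sub>C C (J (h j))) + T"
      by (rule closed_op_sums[OF B _ xs bs]) (use SD in auto)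
    show ?thesis
      using res ks AT sums_unique[OF AT] sums_summable[OF AT] unfolding h_def by simp
  qed
  show ?thesis
  proof (intro conjI impI)
    show "\<forall>v. summable (\<lambda>j. SY j (f (v - int j)))" by (rule C1)
    show "bounded (range u)" by (rule C2)
  next
    assume "(\<lambda>l. norm (f l)) summable_on UNIV \<and> bounded (range k)
               \<and> bdd_above (range (\<lambda>v. onorm (A v)))"
    then show "(\<lambda>v. norm (u v)) summable_on UNIV" using C3 by blast
  qed (use C45 in blast)+
qed
end
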